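(* Consider the two-dimensional Euler–Poincaré equation $\partial_t\mathbf m=-\mathbf u\cdot\nabla\mathbf m-(\nabla\mathbf u)^T\cdot\mathbf m-\mathbf m\,\mathrm{div}\,\mathbf u$ with $\mathbf m=\mathbf u-\Delta\mathbf u$, restricted to fields depending only on $(x,t)$, so that $\mathbf u(x,t)=\int_{\mathbb R}G(x,y)\mathbf m(y,t)\,dy$ with $G(x,y)=\frac12e^{-|x-y|}$. For the ansatz $$\mathbf m(x,t)=\sum_{i=1}^N\big(p_i(t)\hat{\mathbf x}+v_i(t)\hat{\mathbf y}\big)\delta(x-q_i(t)),$$ both the $x$- and $y$-components of the equation yield the same equation $\dot q_i=\sum_jp_jG(q_i,q_j)$; moreover $\dot v_i=0$, and $(q_i,p_i)$ satisfy Hamilton's canonical equations $\dot q_i=\partial H/\partial p_i$, $\dot p_i=-\partial H/\partial q_i$ with $$H=\frac12\sum_{i,j=1}^N(p_ip_j+v_iv_j)G(q_i,q_j),$$ the $v_i$ being constant parameters. The variables $y_i$ canonically conjugate to $v_i$ ($\{y_i,v_j\}=\delta_{ij}$) satisfy $\dot y_i=\sum_jv_jG(q_i,q_j)=\hat{\mathbf y}\cdot\mathbf u(q_i,t)$.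
   Context: $\hat{\mathbf x},\hat{\mathbf y}$ are the Cartesian unit vectors; solutions are understood in the weak (distributional) sense, with the derivative of $G$ at its kink interpreted as the average of the one-sided limits, consistently with $\partial H/\partial q_i$. The $q_i$ are assumed distinct. *)

theory Defs
  imports "HOL-Analysis.Analysis"
begin

text \<open>Green function of 1 - d^2/dx^2 on the real line.\<close>
definition G :: "real \<Rightarrow> real \<Rightarrow> real" where
  "G x y = exp (- \<bar>x - y\<bar>) / 2"

text \<open>x-derivative of G(x,y); at the kink x = y it is the average of the
  one-sided limits (namely 0), which is what sgn 0 = 0 produces.\<close>
definition Gx :: "real \<Rightarrow> real \<Rightarrow> real" where
  "Gx x y = - sgn (x - y) * G x y"

text \<open>For m = sum_j a_j(t) delta(x - q_j(t)) (one component of the momentum),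
  the corresponding velocity component  u(x,t) = int G(x,y) m(y,t) dy  and its
  x-derivative (averaged at the kinks).\<close>
definition vel :: "nat \<Rightarrow> (nat \<Rightarrow> real \<Rightarrow> real) \<Rightarrow> (nat \<Rightarrow> real \<Rightarrow> real) \<Rightarrow> real \<Rightarrow> real \<Rightarrow> real" where
  "vel N q a x t = (\<Sum>j<N. a j t * G x (q j t))"

definition dvel :: "nat \<Rightarrow> (nat \<Rightarrow> real \<Rightarrow> real) \<Rightarrow> (nat \<Rightarrow> real \<Rightarrow> real) \<Rightarrow> real \<Rightarrow> real \<Rightarrow> real" where
  "dvel N q a x t = (\<Sum>j<N. a j t * Gx x (q j t))"

text \<open>Test functions on R x T (first coordinate x, second t): C^1 with compact
  support contained in R x T; phix, phit are its partial derivatives.\<close>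
definition test_fn :: "real set \<Rightarrow> (real \<times> real \<Rightarrow> real) \<Rightarrow> (real \<times> real \<Rightarrow> real)
    \<Rightarrow> (real \<times> real \<Rightarrow> real) \<Rightarrow> bool" where
  "test_fn T \<phi> \<phi>x \<phi>t \<longleftrightarrow>
     continuous_on UNIV \<phi>x \<and> continuous_on UNIV \<phi>t \<and>
     (\<forall>z. (\<phi> has_derivative (\<lambda>h. \<phi>x z * fst h + \<phi>t z * snd h)) (at z)) \<and>
     compact (closure {z. \<phi> z \<noteq> 0}) \<and> closure {z. \<phi> z \<noteq> 0} \<subseteq> UNIV \<times> T"

text \<open>Weak form of the x-component of the 2D EP equation for fields depending on
  (x,t) only:  d_t m1 + d_x(u1 m1) + (d_x u1) m1 + (d_x u2) m2 = 0,
  with m1 = sum p_i delta(x-q_i), m2 = sum v_i delta(x-q_i), u = G * m.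
  Pairing with a test function phi (delta pairing = point evaluation).\<close>
definition weak_EP_x :: "nat \<Rightarrow> (nat \<Rightarrow> real \<Rightarrow> real) \<Rightarrow> (nat \<Rightarrow> real \<Rightarrow> real)
    \<Rightarrow> (nat \<Rightarrow> real \<Rightarrow> real) \<Rightarrow> real set \<Rightarrow> bool" where
  "weak_EP_x N q p v T \<longleftrightarrow>
     (\<forall>\<phi> \<phi>x \<phi>t. test_fn T \<phi> \<phi>x \<phi>t \<longrightarrow>
        ((\<lambda>t. \<Sum>i<N. p i t * (\<phi>t (q i t, t) + vel N q p (q i t) t * \<phi>x (q i t, t))
                   - (dvel N q p (q i t) t * p i t + dvel N q v (q i t) t * v i t) * \<phi> (q i t, t))
          has_integral 0) T)"

text \<open>Weak form of the y-component:  d_t m2 + d_x(u1 m2) = 0.\<close>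
definition weak_EP_y :: "nat \<Rightarrow> (nat \<Rightarrow> real \<Rightarrow> real) \<Rightarrow> (nat \<Rightarrow> real \<Rightarrow> real)
    \<Rightarrow> (nat \<Rightarrow> real \<Rightarrow> real) \<Rightarrow> real set \<Rightarrow> bool" where
  "weak_EP_y N q p v T \<longleftrightarrow>
     (\<forall>\<phi> \<phi>x \<phi>t. test_fn T \<phi> \<phi>x \<phi>t \<longrightarrow>
        ((\<lambda>t. \<Sum>i<N. v i t * (\<phi>t (q i t, t) + vel N q p (q i t) t * \<phi>x (q i t, t)))
          has_integral 0) T)"

definition Ham :: "nat \<Rightarrow> (nat \<Rightarrow> real) \<Rightarrow> (nat \<Rightarrow> real) \<Rightarrow> (nat \<Rightarrow> real) \<Rightarrow> real" where
  "Ham N Q P V = (1/2) * (\<Sum>i<N. \<Sum>j<N. (P i * P j + V i * V j) * G (Q i) (Q j))"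

end

theory Submission
  imports Defs
begin

definition bmp :: "real \<Rightarrow> real \<Rightarrow> real \<Rightarrow> real" where
  "bmp r c x = (max 0 (r^2 - (x-c)^2))^2"
definition dbmp :: "real \<Rightarrow> real \<Rightarrow> real \<Rightarrow> real" where
  "dbmp r c x = 2 * max 0 (r^2 - (x-c)^2) * (-2*(x-c))"

lemma sqpos_deriv: "((\<lambda>y::real. (max 0 y)^2) has_real_derivative 2 * max 0 y) (at y)"
proof (cases "y = 0")
  case True
  have "((\<lambda>z::real. (max 0 z)^2) has_real_derivative 0) (at 0)"
    unfolding has_field_derivative_iff
  proof -
    have "((\<lambda>z::real. max 0 z) \<longlongrightarrow> max 0 0) (at 0)"
      by (intro tendsto_intros)
    then have l: "((\<lambda>z::real. max 0 z) \<longlongrightarrow> 0) (at 0)" by simp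
    have e: "((max 0 z)\<^sup>2 - (max 0 0)\<^sup>2) / (z - 0) = max 0 z" if "z \<noteq> 0" for z :: real
    proof (cases "z > 0")
      case True then show ?thesis by (simp add: power2_eq_square)
    next
      case False then show ?thesis by (simp add: max_def)
    qed
    have ev: "\<forall>\<^sub>F z in at (0::real). max 0 z = ((max 0 z)\<^sup>2 - (max 0 0)\<^sup>2) / (z - 0)"
      unfolding eventually_at_filter by (rule always_eventually) (use e in auto)
    show "((\<lambda>z::real. ((max 0 z)\<^sup>2 - (max 0 0)\<^sup>2) / (z - 0)) \<longlongrightarrow> 0) (at 0)"
      by (rule Lim_transform_eventually[OF l ev])
  qed
  then show ?thesis using True by simp
next
  case False
  show ?thesis
  proof (cases "y > 0")
    case True
    have "((\<lambda>y::real. y^2) has_real_derivative 2 * y) (at y)"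
      by (auto intro!: derivative_eq_intros)
    then have "((\<lambda>y::real. y^2) has_real_derivative 2 * max 0 y) (at y)"
      using True by simp
    then show ?thesis
      apply (rule has_field_derivative_transform_within_open[where S="{0<..}"])
      using True by auto
  next
    case F: False
    have "((\<lambda>y::real. 0) has_real_derivative 2 * max 0 y) (at y)"
      using F False by simp
    then show ?thesis
      apply (rule has_field_derivative_transform_within_open[where S="{..<0}"])
      using F False by auto
  qed
qed

lemma bmp_deriv: "(bmp r c has_real_derivative dbmp r c x) (at x)"
proof -
  have "((\<lambda>x. (max 0 (r^2 - (x-c)^2))^2) has_real_derivative
      (2 * max 0 (r^2 - (x-c)^2)) * (-(2 * (x - c) * 1))) (at x)"
    apply (rule DERIV_chain2[OF sqpos_deriv])
    apply (auto intro!: derivative_eq_intros)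
    done
  then show ?thesis unfolding bmp_def[abs_def] dbmp_def by (simp add: algebra_simps)
qed

lemma bmp_zero: "r \<ge> 0 \<Longrightarrow> \<bar>x - c\<bar> \<ge> r \<Longrightarrow> bmp r c x = 0 \<and> dbmp r c x = 0"
proof -
  assume "r \<ge> 0" "\<bar>x - c\<bar> \<ge> r"
  then have "r^2 \<le> (x-c)^2" by (metis abs_le_square_iff abs_of_nonneg)
  then show ?thesis unfolding bmp_def dbmp_def by auto
qed

lemma bmp_nonneg: "bmp r c x \<ge> 0" unfolding bmp_def by simp

lemma dbmp_cont: "continuous_on UNIV (dbmp r c)"
  unfolding dbmp_def by (intro continuous_intros)

lemma bmp_center: "bmp r c c = r^4" "dbmp r c c = 0"
  unfolding bmp_def dbmp_def by auto


lemma test_prod: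
  fixes \<beta> \<beta>' \<psi> \<psi>' :: "real \<Rightarrow> real"
  assumes db: "\<And>x. (\<beta> has_real_derivative \<beta>' x) (at x)" and cb: "continuous_on UNIV \<beta>'"
    and dp: "\<And>t. (\<psi> has_real_derivative \<psi>' t) (at t)" and cp: "continuous_on UNIV \<psi>'"
    and zb: "\<And>x. \<bar>x - c\<bar> \<ge> r \<Longrightarrow> \<beta> x = 0"
    and zp: "\<And>t. \<bar>t - t0\<bar> \<ge> \<rho> \<Longrightarrow> \<psi> t = 0"
    and sub: "cball t0 \<rho> \<subseteq> T"
  shows "test_fn T (\<lambda>z. \<beta> (fst z) * \<psi> (snd z)) (\<lambda>z. \<beta>' (fst z) * \<psi> (snd z))
           (\<lambda>z. \<beta> (fst z) * \<psi>' (snd z))"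
proof -
  have cb0: "continuous_on UNIV \<beta>"
    by (meson DERIV_isCont continuous_at_imp_continuous_on db)
  have cp0: "continuous_on UNIV \<psi>"
    by (meson DERIV_isCont continuous_at_imp_continuous_on dp)
  have c1: "continuous_on UNIV (\<lambda>z::real\<times>real. \<beta>' (fst z) * \<psi> (snd z))"
    by (intro continuous_intros continuous_on_compose2[OF cb] continuous_on_compose2[OF cp0]) auto
  have c2: "continuous_on UNIV (\<lambda>z::real\<times>real. \<beta> (fst z) * \<psi>' (snd z))"
    by (intro continuous_intros continuous_on_compose2[OF cb0] continuous_on_compose2[OF cp]) auto
  have d: "((\<lambda>z. \<beta> (fst z) * \<psi> (snd z)) has_derivative
      (\<lambda>h. \<beta>' (fst z) * \<psi> (snd z) * fst h + \<beta> (fst z) * \<psi>' (snd z) * snd h)) (at z)" for z :: "real \<times> real"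
  proof -
    have d1: "((\<lambda>z. \<beta> (fst z)) has_derivative (\<lambda>h. \<beta>' (fst z) * fst h)) (at z)"
      using has_derivative_compose[OF has_derivative_fst[OF has_derivative_ident] db[of "fst z", unfolded has_field_derivative_def]]
      by simp
    have d2: "((\<lambda>z. \<psi> (snd z)) has_derivative (\<lambda>h. \<psi>' (snd z) * snd h)) (at z)"
      using has_derivative_compose[OF has_derivative_snd[OF has_derivative_ident] dp[of "snd z", unfolded has_field_derivative_def]]
      by simp
    show ?thesis
      by (rule has_derivative_eq_rhs[OF has_derivative_mult[OF d1 d2]]) (auto simp: algebra_simps)
  qed
  have supp: "{z. \<beta> (fst z) * \<psi> (snd z) \<noteq> 0} \<subseteq> cball c r \<times> cball t0 \<rho>"
  proof
    fix z :: "real \<times> real" assume "z \<in> {z. \<beta> (fst z) * \<psi> (snd z) \<noteq> 0}"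
    then have "\<beta> (fst z) \<noteq> 0" "\<psi> (snd z) \<noteq> 0" by auto
    then have "\<bar>fst z - c\<bar> < r" "\<bar>snd z - t0\<bar> < \<rho>" using zb zp by force+
    then show "z \<in> cball c r \<times> cball t0 \<rho>"
      by (cases z) (auto simp: dist_real_def abs_minus_commute)
  qed
  have cl: "closure {z. \<beta> (fst z) * \<psi> (snd z) \<noteq> 0} \<subseteq> cball c r \<times> cball t0 \<rho>"
    by (rule closure_minimal[OF supp]) (simp add: closed_Times)
  have comp: "compact (closure {z. \<beta> (fst z) * \<psi> (snd z) \<noteq> 0})"
    unfolding compact_closure
    by (rule bounded_subset[OF _ supp]) (simp add: bounded_Times)
  show ?thesis
    unfolding test_fn_def using c1 c2 d comp cl sub by blast
qed


lemma bmp_lower: "\<bar>t - t0\<bar> \<le> \<rho>/2 \<Longrightarrow> bmp \<rho> t0 t \<ge> (3*\<rho>^2/4)^2"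
proof -
  assume a: "\<bar>t - t0\<bar> \<le> \<rho>/2"
  have "\<bar>t-t0\<bar>^2 \<le> (\<rho>/2)^2" by (rule power_mono[OF a abs_ge_zero])
  then have "(t-t0)^2 \<le> (\<rho>/2)^2" by simp
  then have "3*\<rho>^2/4 \<le> \<rho>^2 - (t-t0)^2" by (simp add: power2_eq_square)
  then have h1: "3*\<rho>^2/4 \<le> max 0 (\<rho>^2 - (t-t0)^2)" by linarith
  have h2: "0 \<le> 3*\<rho>^2/4" by simp
  show ?thesis unfolding bmp_def by (rule power_mono[OF h1 h2])
qed

lemma loc1:
  fixes h :: "real \<Rightarrow> real"
  assumes T: "open T" and t0: "t0 \<in> T" and hc: "isCont h t0"
    and I: "\<And>\<rho>. \<rho> > 0 \<Longrightarrow> cball t0 \<rho> \<subseteq> T \<Longrightarrow> ((\<lambda>t. h t * bmp \<rho> t0 t) has_integral 0) T"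
  shows "h t0 = 0"
proof (rule ccontr)
  assume hne: "h t0 \<noteq> 0"
  define k where "k = h t0"
  have kk: "k*k > 0" using hne k_def by (simp add: zero_less_mult_iff) linarith
  obtain \<delta> where \<delta>: "\<delta> > 0" "\<And>t. dist t t0 < \<delta> \<Longrightarrow> dist (h t) (h t0) < \<bar>k\<bar>/2"
    using hc[unfolded continuous_at_eps_delta] hne k_def by (metis zero_less_abs_iff half_gt_zero)
  obtain e where e: "e > 0" "ball t0 e \<subseteq> T" using T t0 open_contains_ball by blast
  define \<rho> where "\<rho> = min \<delta> e / 2"
  have \<rho>: "\<rho> > 0" using \<delta> e \<rho>_def by auto
  have sub: "cball t0 \<rho> \<subseteq> T" 
  proof -
    have "\<rho> < e" using \<rho>_def e \<delta> by linarith
    then have "cball t0 \<rho> \<subseteq> ball t0 e" by (auto simp: subset_eq)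
    then show ?thesis using e by blast
  qed
  define f where "f t = k * (h t * bmp \<rho> t0 t)" for t
  have gpos: "k * h t \<ge> k*k/2" if "\<bar>t - t0\<bar> < \<rho>" for t
  proof -
    have "dist t t0 < \<delta>" using that \<rho>_def \<delta> e by (simp add: dist_real_def)
    then have "dist (h t) k < \<bar>k\<bar>/2" using \<delta>(2)[of t] k_def by simp
    then have "\<bar>h t - k\<bar> < \<bar>k\<bar>/2" by (simp add: dist_real_def)
    then have "\<bar>k*h t - k*k\<bar> \<le> \<bar>k\<bar>*\<bar>k\<bar>/2"
      by (metis abs_ge_zero abs_mult less_imp_le mult_left_mono right_diff_distrib times_divide_eq_right)
    then show ?thesis unfolding abs_mult_self_eq abs_le_iff by linarith
  qed
  have fT: "(f has_integral 0) T"
    using has_integral_mult_right[OF I[OF \<rho> sub], of k] unfolding f_def by simp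
  have fz: "f t = 0" if "t \<notin> T" for t
  proof -
    have "t \<notin> cball t0 \<rho>" using that sub by auto
    then have "\<bar>t - t0\<bar> \<ge> \<rho>" by (simp add: dist_real_def abs_minus_commute)
    then show ?thesis unfolding f_def using bmp_zero[of \<rho> t t0] \<rho> by simp
  qed
  have fU: "(f has_integral 0) UNIV" by (rule has_integral_on_superset[OF fT fz]) auto
  have fnn: "f t \<ge> 0" for t
  proof (cases "\<bar>t - t0\<bar> < \<rho>")
    case True
    have "k * h t \<ge> 0" using gpos[OF True] kk by linarith
    then show ?thesis unfolding f_def using bmp_nonneg[of \<rho> t0 t]
      by (metis mult.assoc zero_le_mult_iff)
  next
    case False
    then show ?thesis unfolding f_def using bmp_zero[of \<rho> t t0] \<rho> by simp
  qed
  define m where "m = k*k/2 * (3*\<rho>^2/4)^2"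
  have mpos: "m > 0" unfolding m_def using kk \<rho> by simp
  define S where "S = {t0 - \<rho>/2 .. t0 + \<rho>/2}"
  have fS: "f integrable_on S" unfolding S_def
    by (rule integrable_on_subinterval[OF has_integral_integrable[OF fU]]) auto
  have le1: "integral S f \<le> integral UNIV f"
    by (rule integral_subset_le) (use fS fU fnn in auto)
  have "integral UNIV f = 0" using fU by (rule integral_unique)
  have lowS: "m \<le> f t" if "t \<in> S" for t
  proof -
    have a: "\<bar>t - t0\<bar> \<le> \<rho>/2" using that S_def unfolding abs_le_iff by auto
    then have b: "\<bar>t - t0\<bar> < \<rho>" using \<rho> by linarith
    have "k*k/2 * (3*\<rho>^2/4)^2 \<le> (k*h t) * bmp \<rho> t0 t"
      by (rule mult_mono) (use gpos[OF b] bmp_lower[OF a] kk in auto)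
    then show ?thesis unfolding m_def f_def by (simp add: mult.assoc)
  qed
  have "integral S (\<lambda>t. m) \<le> integral S f"
    by (rule integral_le) (use fS lowS S_def in auto)
  moreover have "integral S (\<lambda>t. m) = \<rho> * m" unfolding S_def using \<rho> by simp
  ultimately have "\<rho> * m \<le> 0" using le1 \<open>integral UNIV f = 0\<close> by linarith
  then show False using \<rho> mpos by (simp add: mult_le_0_iff)
qed


lemma loc_beta:
  fixes a b q :: "nat \<Rightarrow> real \<Rightarrow> real" and \<beta> \<beta>' :: "real \<Rightarrow> real"
  assumes T: "open T" and t0: "t0 \<in> T" and i: "i < N"
    and qc: "\<forall>j<N. continuous_on T (q j)"
    and ac: "\<forall>j<N. continuous_on T (a j)" and bc: "\<forall>j<N. continuous_on T (b j)"
    and W: "\<forall>\<phi> \<phi>x \<phi>t. test_fn T \<phi> \<phi>x \<phi>t \<longrightarrow>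
       ((\<lambda>t. \<Sum>j<N. a j t * \<phi> (q j t, t) + b j t * \<phi>x (q j t, t)) has_integral 0) T"
    and db: "\<And>x. (\<beta> has_real_derivative \<beta>' x) (at x)" and cb: "continuous_on UNIV \<beta>'"
    and r: "r > 0" and zb: "\<And>x. \<bar>x - q i t0\<bar> \<ge> r \<Longrightarrow> \<beta> x = 0 \<and> \<beta>' x = 0"
    and far: "\<forall>j<N. j \<noteq> i \<longrightarrow> \<bar>q j t0 - q i t0\<bar> \<ge> r"
  shows "a i t0 * \<beta> (q i t0) + b i t0 * \<beta>' (q i t0) = 0"
proof -
  define h where "h t = (\<Sum>j<N. a j t * \<beta> (q j t) + b j t * \<beta>' (q j t))" for t
  have cb0: "continuous_on UNIV \<beta>"
    by (meson DERIV_isCont continuous_at_imp_continuous_on db)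
  have hc: "continuous_on T h" unfolding h_def
    using ac bc qc by (auto intro!: continuous_on_sum continuous_intros continuous_on_compose2[OF cb0] continuous_on_compose2[OF cb])
  have "h t0 = 0"
  proof (rule loc1[OF T t0])
    show "isCont h t0" using hc T t0 continuous_on_eq_continuous_at by blast
    fix \<rho> :: real assume \<rho>: "\<rho> > 0" "cball t0 \<rho> \<subseteq> T"
    have tf: "test_fn T (\<lambda>z. \<beta> (fst z) * bmp \<rho> t0 (snd z)) (\<lambda>z. \<beta>' (fst z) * bmp \<rho> t0 (snd z))
           (\<lambda>z. \<beta> (fst z) * dbmp \<rho> t0 (snd z))"
      by (rule test_prod[OF db cb bmp_deriv dbmp_cont, where c="q i t0" and r=r and \<rho>=\<rho>])
         (use zb bmp_zero \<rho> in auto)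
    have "((\<lambda>t. \<Sum>j<N. a j t * (\<beta> (q j t) * bmp \<rho> t0 t) + b j t * (\<beta>' (q j t) * bmp \<rho> t0 t)) has_integral 0) T"
      using W tf by fastforce
    moreover have "(\<Sum>j<N. a j t * (\<beta> (q j t) * bmp \<rho> t0 t) + b j t * (\<beta>' (q j t) * bmp \<rho> t0 t))
        = h t * bmp \<rho> t0 t" for t
      unfolding h_def sum_distrib_right by (simp add: algebra_simps)
    ultimately show "((\<lambda>t. h t * bmp \<rho> t0 t) has_integral 0) T" by simp
  qed
  moreover have "h t0 = a i t0 * \<beta> (q i t0) + b i t0 * \<beta>' (q i t0)"
  proof -
    have "h t0 = a i t0 * \<beta> (q i t0) + b i t0 * \<beta>' (q i t0) +
        (\<Sum>j\<in>{..<N} - {i}. a j t0 * \<beta> (q j t0) + b j t0 * \<beta>' (q j t0))"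
      unfolding h_def using i by (simp add: sum.remove)
    moreover have "(\<Sum>j\<in>{..<N} - {i}. a j t0 * \<beta> (q j t0) + b j t0 * \<beta>' (q j t0)) = 0"
      by (rule sum.neutral) (use far zb in auto)
    ultimately show ?thesis by simp
  qed
  ultimately show ?thesis by simp
qed

lemma localize:
  fixes a b q :: "nat \<Rightarrow> real \<Rightarrow> real"
  assumes T: "open T"
    and qc: "\<forall>j<N. continuous_on T (q j)"
    and ac: "\<forall>j<N. continuous_on T (a j)" and bc: "\<forall>j<N. continuous_on T (b j)"
    and dist: "\<forall>t\<in>T. \<forall>i<N. \<forall>j<N. i \<noteq> j \<longrightarrow> q i t \<noteq> q j t"
    and W: "\<forall>\<phi> \<phi>x \<phi>t. test_fn T \<phi> \<phi>x \<phi>t \<longrightarrow>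
       ((\<lambda>t. \<Sum>j<N. a j t * \<phi> (q j t, t) + b j t * \<phi>x (q j t, t)) has_integral 0) T"
    and i: "i < N" and t0: "t0 \<in> T"
  shows "a i t0 = 0 \<and> b i t0 = 0"
proof -
  obtain r where r: "r > 0" "\<forall>x\<in>(\<lambda>j. q j t0) ` ({..<N} - {i}). x \<noteq> q i t0 \<longrightarrow> r \<le> dist (q i t0) x"
    using finite_set_avoid[of "(\<lambda>j. q j t0) ` ({..<N} - {i})" "q i t0"] by auto
  have far: "\<forall>j<N. j \<noteq> i \<longrightarrow> \<bar>q j t0 - q i t0\<bar> \<ge> r"
  proof (intro allI impI)
    fix j assume j: "j < N" "j \<noteq> i"
    then have "q j t0 \<noteq> q i t0" using dist t0 i by auto
    then show "\<bar>q j t0 - q i t0\<bar> \<ge> r" using r j by (auto simp: dist_real_def abs_minus_commute)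
  qed
  have 1: "a i t0 * bmp r (q i t0) (q i t0) + b i t0 * dbmp r (q i t0) (q i t0) = 0"
    by (rule loc_beta[OF T t0 i qc ac bc W bmp_deriv dbmp_cont r(1) _ far])
       (use bmp_zero r in auto)
  have 2: "a i t0 * ((q i t0 - q i t0) * bmp r (q i t0) (q i t0)) +
     b i t0 * (bmp r (q i t0) (q i t0) + (q i t0 - q i t0) * dbmp r (q i t0) (q i t0)) = 0"
  proof (rule loc_beta[OF T t0 i qc ac bc W _ _ r(1) _ far, where \<beta>="\<lambda>x. (x - q i t0) * bmp r (q i t0) x"
     and \<beta>'="\<lambda>x. bmp r (q i t0) x + (x - q i t0) * dbmp r (q i t0) x"])
    show "((\<lambda>x. (x - q i t0) * bmp r (q i t0) x) has_real_derivative
        bmp r (q i t0) x + (x - q i t0) * dbmp r (q i t0) x) (at x)" for x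
      by (rule derivative_eq_intros bmp_deriv refl | simp)+
    show "continuous_on UNIV (\<lambda>x. bmp r (q i t0) x + (x - q i t0) * dbmp r (q i t0) x)"
      unfolding bmp_def dbmp_def by (intro continuous_intros)
    show "(x - q i t0) * bmp r (q i t0) x = 0 \<and> bmp r (q i t0) x + (x - q i t0) * dbmp r (q i t0) x = 0"
      if "r \<le> \<bar>x - q i t0\<bar>" for x using bmp_zero[of r x "q i t0"] r that by simp
  qed
  show ?thesis using 1 2 r(1) by (simp add: bmp_center)
qed


lemma C1_open:
  fixes f :: "real \<Rightarrow> real"
  assumes "f C1_differentiable_on T" "open T"
  shows "\<forall>x\<in>T. (f has_real_derivative deriv f x) (at x)" "continuous_on T (deriv f)"
    "continuous_on T f"
proof -
  obtain D where D: "\<forall>x\<in>T. (f has_vector_derivative D x) (at x)" "continuous_on T D"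
    using assms(1) unfolding C1_differentiable_on_def by blast
  have d: "\<forall>x\<in>T. (f has_real_derivative D x) (at x)"
    using D(1) has_real_derivative_iff_has_vector_derivative by blast
  then have e: "\<forall>x\<in>T. deriv f x = D x" using DERIV_imp_deriv by blast
  show "\<forall>x\<in>T. (f has_real_derivative deriv f x) (at x)" using d e by simp
  show "continuous_on T (deriv f)" using D(2) e continuous_on_cong by metis
  show "continuous_on T f"
    using d DERIV_isCont continuous_at_imp_continuous_on by blast
qed

lemma chain_phi:
  assumes tf: "test_fn T \<phi> \<phi>x \<phi>t" and dq: "(q has_real_derivative q') (at t)"
  shows "((\<lambda>s. \<phi> (q s, s)) has_real_derivative (\<phi>x (q t, t) * q' + \<phi>t (q t, t))) (at t)"
proof -
  have dphi: "(\<phi> has_derivative (\<lambda>h. \<phi>x (q t, t) * fst h + \<phi>t (q t, t) * snd h)) (at (q t, t))"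
    using tf unfolding test_fn_def by blast
  have dp: "((\<lambda>s. (q s, s)) has_derivative (\<lambda>h. (q' * h, h))) (at t)"
    using has_derivative_Pair[OF dq[unfolded has_field_derivative_def] has_derivative_ident]
    by simp
  show ?thesis
    unfolding has_field_derivative_def
    by (rule has_derivative_eq_rhs[OF has_derivative_compose[OF dp dphi]]) (auto simp: algebra_simps)
qed

lemma ibp:
  fixes q r :: "nat \<Rightarrow> real \<Rightarrow> real"
  assumes T: "open T" and qd: "\<forall>j<N. q j C1_differentiable_on T"
    and rd: "\<forall>j<N. r j C1_differentiable_on T" and tf: "test_fn T \<phi> \<phi>x \<phi>t"
  shows "((\<lambda>t. \<Sum>j<N. deriv (r j) t * \<phi> (q j t, t) + r j t * (\<phi>x (q j t, t) * deriv (q j) t + \<phi>t (q j t, t))) has_integral 0) T"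
proof -
  define E where "E t = (\<Sum>j<N. deriv (r j) t * \<phi> (q j t, t) + r j t * (\<phi>x (q j t, t) * deriv (q j) t + \<phi>t (q j t, t)))" for t
  define g where "g t = (\<Sum>j<N. r j t * \<phi> (q j t, t))" for t
  define K where "K = closure {z. \<phi> z \<noteq> 0}"
  have K: "compact K" "K \<subseteq> UNIV \<times> T" using tf unfolding test_fn_def K_def by blast+
  define Kt where "Kt = snd ` K"
  have Ktc: "compact Kt" unfolding Kt_def
    by (rule compact_continuous_image[OF _ K(1)]) (intro continuous_intros)
  have KtT: "Kt \<subseteq> T" using K(2) unfolding Kt_def by force
  have phiz: "\<phi> (x, s) = 0" if "s \<notin> Kt" for x s
  proof (rule ccontr)
    assume "\<phi> (x, s) \<noteq> 0"
    then have "(x, s) \<in> {z. \<phi> z \<noteq> 0}" by simp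
    then have "(x, s) \<in> K" unfolding K_def by (rule subsetD[OF closure_subset])
    then have "s \<in> Kt" unfolding Kt_def by (rule rev_image_eqI) simp
    then show False using that by simp
  qed
  have gz: "g s = 0" if "s \<notin> Kt" for s unfolding g_def using phiz[OF that] by simp
  have dT: "(g has_real_derivative E t) (at t)" if "t \<in> T" for t
    unfolding g_def E_def
  proof (rule DERIV_sum)
    fix j assume "j \<in> {..<N}"
    then have j: "j < N" by simp
    have dr: "(r j has_real_derivative deriv (r j) t) (at t)" using C1_open(1)[OF _ T] rd j that by blast
    have dq: "(q j has_real_derivative deriv (q j) t) (at t)" using C1_open(1)[OF _ T] qd j that by blast
    show "((\<lambda>x. r j x * \<phi> (q j x, x)) has_real_derivative
        deriv (r j) t * \<phi> (q j t, t) + r j t * (\<phi>x (q j t, t) * deriv (q j) t + \<phi>t (q j t, t))) (at t)"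
      by (subst add.commute) (rule DERIV_mult'[OF dr chain_phi[OF tf dq]])
  qed
  have dK: "(g has_real_derivative 0) (at t)" if "t \<notin> Kt" for t
  proof -
    have z: "((\<lambda>s. 0) has_real_derivative 0) (at t)" by simp
    have o: "open (- Kt)" using compact_imp_closed[OF Ktc] by (simp add: open_Compl)
    have t: "t \<in> - Kt" using that by simp
    show ?thesis
      by (rule has_field_derivative_transform_within_open[OF z o t]) (simp add: gz)
  qed
  define D where "D t = (if t \<in> T then E t else 0)" for t
  have dD: "(g has_real_derivative D t) (at t)" for t
  proof (cases "t \<in> T")
    case True then show ?thesis using dT[OF True] unfolding D_def by simp
  next
    case False
    then have "t \<notin> Kt" using KtT by blast
    then show ?thesis using dK[of t] False unfolding D_def by simp
  qed
  have Dz: "D t = 0" if "t \<notin> Kt" for t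
    using dD[of t] dK[OF that] DERIV_unique by blast
  obtain B where B: "\<forall>x\<in>Kt. \<bar>x\<bar> \<le> B" using compact_imp_bounded[OF Ktc] bounded_real by blast
  define a where "a = - \<bar>B\<bar> - 1"
  define b where "b = \<bar>B\<bar> + 1"
  have inab: "x \<in> {a<..<b}" if "x \<in> Kt" for x
  proof -
    have "\<bar>x\<bar> \<le> B" using B that by blast
    moreover have "B \<le> \<bar>B\<bar>" by (rule abs_ge_self)
    ultimately have "\<bar>x\<bar> \<le> \<bar>B\<bar>" by linarith
    then show ?thesis unfolding a_def b_def greaterThanLessThan_iff abs_le_iff by linarith
  qed
  have aK: "a \<notin> Kt" "b \<notin> Kt" using inab by fastforce+
  have ab: "a \<le> b" unfolding a_def b_def by simp
  have dDv: "(g has_vector_derivative D x) (at x within {a..b})" for x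
    using dD[of x] unfolding has_real_derivative_iff_has_vector_derivative
    by (rule has_vector_derivative_at_within)
  have "(D has_integral g b - g a) {a..b}"
    by (rule fundamental_theorem_of_calculus[OF ab dDv])
  then have "(D has_integral 0) {a..b}" using gz aK by simp
  then have "(D has_integral 0) UNIV"
  proof (rule has_integral_on_superset)
    fix x assume "x \<notin> {a..b}"
    then have "x \<notin> Kt" using inab by fastforce
    then show "D x = 0" by (rule Dz)
  qed auto
  moreover have eqD: "(\<lambda>x. if x \<in> T then D x else 0) = D" by (rule ext) (simp add: D_def)
  ultimately have "((\<lambda>x. if x \<in> T then D x else 0) has_integral 0) UNIV" by simp
  then have DT: "(D has_integral 0) T" unfolding has_integral_restrict_UNIV .
  have eqE: "D x = E x" if "x \<in> T" for x using that unfolding D_def by simp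
  have "(E has_integral 0) T" by (rule has_integral_eq[OF eqE DT])
  then show ?thesis unfolding E_def .
qed


lemma weak_iff:
  fixes q r a b :: "nat \<Rightarrow> real \<Rightarrow> real"
  assumes T: "open T" and qd: "\<forall>j<N. q j C1_differentiable_on T"
    and rd: "\<forall>j<N. r j C1_differentiable_on T"
    and dist: "\<forall>t\<in>T. \<forall>i<N. \<forall>j<N. i \<noteq> j \<longrightarrow> q i t \<noteq> q j t"
    and ac: "\<forall>j<N. continuous_on T (a j)" and bc: "\<forall>j<N. continuous_on T (b j)"
    and eq: "\<And>\<phi> \<phi>x \<phi>t t. t \<in> T \<Longrightarrow> W \<phi> \<phi>x \<phi>t t =
       (\<Sum>j<N. deriv (r j) t * \<phi> (q j t, t) + r j t * (\<phi>x (q j t, t) * deriv (q j) t + \<phi>t (q j t, t)))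
       + (\<Sum>j<N. a j t * \<phi> (q j t, t) + b j t * \<phi>x (q j t, t))"
  shows "(\<forall>\<phi> \<phi>x \<phi>t. test_fn T \<phi> \<phi>x \<phi>t \<longrightarrow> (W \<phi> \<phi>x \<phi>t has_integral 0) T)
     \<longleftrightarrow> (\<forall>j<N. \<forall>t\<in>T. a j t = 0 \<and> b j t = 0)"
proof
  assume H: "\<forall>\<phi> \<phi>x \<phi>t. test_fn T \<phi> \<phi>x \<phi>t \<longrightarrow> (W \<phi> \<phi>x \<phi>t has_integral 0) T"
  have qc: "\<forall>j<N. continuous_on T (q j)" using C1_open(3)[OF _ T] qd by blast
  have W': "\<forall>\<phi> \<phi>x \<phi>t. test_fn T \<phi> \<phi>x \<phi>t \<longrightarrow>
       ((\<lambda>t. \<Sum>j<N. a j t * \<phi> (q j t, t) + b j t * \<phi>x (q j t, t)) has_integral 0) T"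
  proof (intro allI impI)
    fix \<phi> \<phi>x \<phi>t assume tf: "test_fn T \<phi> \<phi>x \<phi>t"
    have "((\<lambda>t. W \<phi> \<phi>x \<phi>t t - (\<Sum>j<N. deriv (r j) t * \<phi> (q j t, t) + r j t * (\<phi>x (q j t, t) * deriv (q j) t + \<phi>t (q j t, t)))) has_integral 0 - 0) T"
      by (rule has_integral_diff[OF H[rule_format, OF tf] ibp[OF T qd rd tf]])
    then have "((\<lambda>t. W \<phi> \<phi>x \<phi>t t - (\<Sum>j<N. deriv (r j) t * \<phi> (q j t, t) + r j t * (\<phi>x (q j t, t) * deriv (q j) t + \<phi>t (q j t, t)))) has_integral 0) T"
      by simp
    then show "((\<lambda>t. \<Sum>j<N. a j t * \<phi> (q j t, t) + b j t * \<phi>x (q j t, t)) has_integral 0) T"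
      by (rule has_integral_eq[rotated]) (simp add: eq)
  qed
  show "\<forall>j<N. \<forall>t\<in>T. a j t = 0 \<and> b j t = 0"
    using localize[OF T qc ac bc dist W'] by blast
next
  assume Z: "\<forall>j<N. \<forall>t\<in>T. a j t = 0 \<and> b j t = 0"
  show "\<forall>\<phi> \<phi>x \<phi>t. test_fn T \<phi> \<phi>x \<phi>t \<longrightarrow> (W \<phi> \<phi>x \<phi>t has_integral 0) T"
  proof (intro allI impI)
    fix \<phi> \<phi>x \<phi>t assume tf: "test_fn T \<phi> \<phi>x \<phi>t"
    show "(W \<phi> \<phi>x \<phi>t has_integral 0) T"
      by (rule has_integral_eq[rotated, OF ibp[OF T qd rd tf]]) (simp add: eq Z)
  qed
qed

lemma sgn_cont:
  fixes q :: "nat \<Rightarrow> real \<Rightarrow> real"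
  assumes T: "open T" and qc: "\<forall>j<N. continuous_on T (q j)"
    and dist: "\<forall>t\<in>T. \<forall>i<N. \<forall>j<N. i \<noteq> j \<longrightarrow> q i t \<noteq> q j t"
    and j: "j < N" and k: "k < N"
  shows "continuous_on T (\<lambda>t. sgn (q j t - q k t))"
proof (cases "j = k")
  case True then show ?thesis by simp
next
  case False
  show ?thesis
  proof (rule continuous_at_imp_continuous_on, rule ballI)
    fix t assume t: "t \<in> T"
    have "isCont (q j) t" "isCont (q k) t"
      using qc j k T t continuous_on_eq_continuous_at by blast+
    then have "((\<lambda>s. q j s - q k s) \<longlongrightarrow> q j t - q k t) (at t)"
      by (intro tendsto_intros) (auto simp: isCont_def)
    moreover have "q j t - q k t \<noteq> 0" using dist t j k False by auto
    ultimately show "isCont (\<lambda>t. sgn (q j t - q k t)) t"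
      unfolding isCont_def by (rule tendsto_sgn)
  qed
qed

lemma vel_cont:
  fixes q w :: "nat \<Rightarrow> real \<Rightarrow> real"
  assumes T: "open T" and qc: "\<forall>j<N. continuous_on T (q j)"
    and wc: "\<forall>j<N. continuous_on T (w j)"
    and dist: "\<forall>t\<in>T. \<forall>i<N. \<forall>j<N. i \<noteq> j \<longrightarrow> q i t \<noteq> q j t"
    and j: "j < N"
  shows "continuous_on T (\<lambda>t. vel N q w (q j t) t)" "continuous_on T (\<lambda>t. dvel N q w (q j t) t)"
proof -
  show "continuous_on T (\<lambda>t. vel N q w (q j t) t)"
    unfolding vel_def G_def using qc wc j
    by (auto intro!: continuous_on_sum continuous_intros)
  show "continuous_on T (\<lambda>t. dvel N q w (q j t) t)"
    unfolding dvel_def Gx_def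
  proof (intro continuous_on_sum continuous_on_mult continuous_on_minus)
    fix k assume k: "k \<in> {..<N}"
    show "continuous_on T (w k)" using wc k by auto
    show "continuous_on T (\<lambda>t. sgn (q j t - q k t))" using sgn_cont[OF T qc dist j] k by auto
    show "continuous_on T (\<lambda>t. G (q j t) (q k t))"
      unfolding G_def using qc j k by (auto intro!: continuous_intros)
  qed
qed


lemma sum_if_const: "(\<Sum>l\<in>S. if c then f l else (0::real)) = (if c then sum f S else 0)" by auto

lemma dsum1: "i < (N::nat) \<Longrightarrow> (\<Sum>k<N. \<Sum>l<N. (w k l::real) * (if k = i then X l else 0)) = (\<Sum>l<N. w i l * X l)"
  by (simp add: if_distrib[where f="\<lambda>x. _ * x"] sum_if_const sum.delta cong: if_cong)
lemma dsum2: "i < (N::nat) \<Longrightarrow> (\<Sum>k<N. \<Sum>l<N. (w k l::real) * (if l = i then X k else 0)) = (\<Sum>k<N. w k i * X k)"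
  by (simp add: if_distrib[where f="\<lambda>x. _ * x"] sum.delta cong: if_cong)

lemma G_sym: "G x y = G y x" unfolding G_def by (simp add: abs_minus_commute)
lemma G_diag: "G x x = 1/2" unfolding G_def by simp
lemma Gx_diag: "Gx x x = 0" unfolding Gx_def by simp

lemma G_deriv:
  assumes "c \<noteq> x"
  shows "((\<lambda>s. G s c) has_real_derivative Gx x c) (at x)"
proof (cases "x > c")
  case True
  have "((\<lambda>s. exp (-(s - c)) / 2) has_real_derivative exp (-(x - c)) * (-(1 - 0)) / 2) (at x)"
    by (auto intro!: derivative_eq_intros)
  then have "((\<lambda>s. exp (-(s - c)) / 2) has_real_derivative Gx x c) (at x)"
    using True by (simp add: Gx_def G_def)
  then show ?thesis
    by (rule has_field_derivative_transform_within_open[where S="{c<..}"])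
       (use True in \<open>auto simp: G_def\<close>)
next
  case False
  then have F: "x < c" using assms by auto
  have "((\<lambda>s. exp (s - c) / 2) has_real_derivative exp (x - c) * (1 - 0) / 2) (at x)"
    by (auto intro!: derivative_eq_intros)
  then have "((\<lambda>s. exp (s - c) / 2) has_real_derivative Gx x c) (at x)"
    using F by (simp add: Gx_def G_def)
  then show ?thesis
    by (rule has_field_derivative_transform_within_open[where S="{..<c}"])
       (use F in \<open>auto simp: G_def\<close>)
qed

lemma Ham_dq:
  assumes i: "i < N" and dist: "\<forall>j<N. j \<noteq> i \<longrightarrow> Q j \<noteq> Q i"
  shows "((\<lambda>s. Ham N (Q(i:=s)) P V) has_real_derivative
     (P i * (\<Sum>j<N. P j * Gx (Q i) (Q j)) + V i * (\<Sum>j<N. V j * Gx (Q i) (Q j)))) (at (Q i))"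
proof -
  define w where "w k l = P k * P l + V k * V l" for k l
  have trm: "((\<lambda>s. G ((Q(i:=s)) k) ((Q(i:=s)) l)) has_real_derivative
      ((if k = i then Gx (Q i) (Q l) else 0) + (if l = i then Gx (Q i) (Q k) else 0))) (at (Q i))"
    if k: "k < N" and l: "l < N" for k l
  proof (cases "k = i")
    case True
    show ?thesis
    proof (cases "l = i")
      case True
      have "((\<lambda>s. 1/2::real) has_real_derivative 0) (at (Q i))" by simp
      then show ?thesis using \<open>k = i\<close> True by (simp add: G_diag Gx_diag)
    next
      case False
      have "Q l \<noteq> Q i" using dist l False by auto
      then show ?thesis using \<open>k = i\<close> False G_deriv[of "Q l" "Q i"] by simp
    qed
  next
    case False
    show ?thesis
    proof (cases "l = i")
      case True
      have "Q k \<noteq> Q i" using dist k False by auto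
      then show ?thesis using False True G_deriv[of "Q k" "Q i"] by (simp add: G_sym[of "Q k"])
    next
      case F2: False
      then show ?thesis using False by simp
    qed
  qed
  have "((\<lambda>s. Ham N (Q(i:=s)) P V) has_real_derivative
     1/2 * (\<Sum>k<N. \<Sum>l<N. w k l * ((if k = i then Gx (Q i) (Q l) else 0) + (if l = i then Gx (Q i) (Q k) else 0)))) (at (Q i))"
    unfolding Ham_def w_def
    by (intro DERIV_cmult DERIV_sum) (use trm in auto)
  moreover have "1/2 * (\<Sum>k<N. \<Sum>l<N. w k l * ((if k = i then Gx (Q i) (Q l) else 0) + (if l = i then Gx (Q i) (Q k) else 0)))
      = P i * (\<Sum>j<N. P j * Gx (Q i) (Q j)) + V i * (\<Sum>j<N. V j * Gx (Q i) (Q j))"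
  proof -
    have "(\<Sum>k<N. \<Sum>l<N. w k l * ((if k = i then Gx (Q i) (Q l) else 0) + (if l = i then Gx (Q i) (Q k) else 0)))
      = (\<Sum>k<N. \<Sum>l<N. w k l * (if k = i then Gx (Q i) (Q l) else 0)) + (\<Sum>k<N. \<Sum>l<N. w k l * (if l = i then Gx (Q i) (Q k) else 0))"
      by (simp add: distrib_left sum.distrib)
    also have "\<dots> = (\<Sum>l<N. w i l * Gx (Q i) (Q l)) + (\<Sum>k<N. w k i * Gx (Q i) (Q k))"
      using dsum1[OF i] dsum2[OF i] by simp
    also have "\<dots> = 2 * (\<Sum>l<N. w i l * Gx (Q i) (Q l))"
      unfolding w_def by (simp add: algebra_simps)
    finally show ?thesis
      unfolding w_def by (simp add: algebra_simps sum_distrib_left sum.distrib)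
  qed
  ultimately show ?thesis by (rule DERIV_cong)
qed

lemma Ham_dp:
  assumes i: "i < N"
  shows "((\<lambda>s. Ham N Q (P(i:=s)) V) has_real_derivative (\<Sum>j<N. P j * G (Q i) (Q j))) (at (P i))"
proof -
  have dP: "((\<lambda>s. (P(i:=s)) k) has_real_derivative (if k = i then 1 else 0)) (at (P i))" for k
    by (cases "k = i") auto
  have trm: "((\<lambda>s. ((P(i:=s)) k * (P(i:=s)) l + V k * V l) * G (Q k) (Q l)) has_real_derivative
      ((if k = i then P l else 0) + (if l = i then P k else 0)) * G (Q k) (Q l)) (at (P i))" for k l
  proof -
    have m: "((\<lambda>s. (P(i:=s)) k * (P(i:=s)) l) has_real_derivative
        (if k = i then 1 else 0) * (P(i:=P i)) l + (if l = i then 1 else 0) * (P(i:=P i)) k) (at (P i))"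
      by (rule DERIV_mult[OF dP dP])
    have "((\<lambda>s. ((P(i:=s)) k * (P(i:=s)) l + V k * V l) * G (Q k) (Q l)) has_real_derivative
      (((if k = i then 1 else 0) * (P(i:=P i)) l + (if l = i then 1 else 0) * (P(i:=P i)) k) + 0) * G (Q k) (Q l)) (at (P i))"
      by (rule DERIV_cmult_right[OF DERIV_add[OF m DERIV_const]])
    then show ?thesis by (rule DERIV_cong) simp
  qed
  have "((\<lambda>s. Ham N Q (P(i:=s)) V) has_real_derivative
     1/2 * (\<Sum>k<N. \<Sum>l<N. ((if k = i then P l else 0) + (if l = i then P k else 0)) * G (Q k) (Q l))) (at (P i))"
    unfolding Ham_def
    by (intro DERIV_cmult DERIV_sum) (use trm in auto)
  moreover have "1/2 * (\<Sum>k<N. \<Sum>l<N. ((if k = i then P l else 0) + (if l = i then P k else 0)) * G (Q k) (Q l))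
     = (\<Sum>j<N. P j * G (Q i) (Q j))"
  proof -
    have "(\<Sum>k<N. \<Sum>l<N. ((if k = i then P l else 0) + (if l = i then P k else 0)) * G (Q k) (Q l))
      = (\<Sum>k<N. \<Sum>l<N. G (Q k) (Q l) * (if k = i then P l else 0)) + (\<Sum>k<N. \<Sum>l<N. G (Q k) (Q l) * (if l = i then P k else 0))"
      unfolding distrib_right sum.distrib by (simp add: mult.commute)
    also have "\<dots> = (\<Sum>l<N. G (Q i) (Q l) * P l) + (\<Sum>k<N. G (Q k) (Q i) * P k)"
      using dsum1[OF i] dsum2[OF i] by simp
    also have "\<dots> = 2 * (\<Sum>j<N. P j * G (Q i) (Q j))"
      by (simp add: G_sym[of _ "Q i"] algebra_simps)
    finally show ?thesis by simp
  qed
  ultimately show ?thesis by (rule DERIV_cong)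
qed

lemma Ham_swap: "Ham N Q P V = Ham N Q V P"
  unfolding Ham_def by (simp add: add.commute)


lemma deriv_iff: "(f has_real_derivative D) (at x) \<Longrightarrow> (f has_real_derivative E) (at x) \<longleftrightarrow> E = D"
  using DERIV_unique by blast

theorem mainTheorem7:
  fixes N :: nat and T :: "real set" and q p v :: "nat \<Rightarrow> real \<Rightarrow> real"
  assumes "open T"
    and "\<forall>i<N. q i C1_differentiable_on T \<and> p i C1_differentiable_on T \<and> v i C1_differentiable_on T"
    and "\<forall>t\<in>T. \<forall>i<N. \<forall>j<N. i \<noteq> j \<longrightarrow> q i t \<noteq> q j t"
  shows
    "(weak_EP_x N q p v T \<longleftrightarrow>
        (\<forall>i<N. \<forall>t\<in>T.
           p i t * (deriv (q i) t - (\<Sum>j<N. p j t * G (q i t) (q j t))) = 0 \<and>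
           ((\<lambda>s. Ham N ((\<lambda>j. q j t)(i := s)) (\<lambda>j. p j t) (\<lambda>j. v j t))
              has_real_derivative (- deriv (p i) t)) (at (q i t))))
     \<and> (weak_EP_y N q p v T \<longleftrightarrow>
        (\<forall>i<N. \<forall>t\<in>T.
           v i t * (deriv (q i) t - (\<Sum>j<N. p j t * G (q i t) (q j t))) = 0 \<and>
           deriv (v i) t = 0))
     \<and> ((\<forall>i<N. \<forall>t\<in>T. p i t \<noteq> 0 \<or> v i t \<noteq> 0) \<longrightarrow>
        (weak_EP_x N q p v T \<and> weak_EP_y N q p v T \<longleftrightarrow>
          (\<forall>i<N. \<forall>t\<in>T.
             deriv (q i) t = (\<Sum>j<N. p j t * G (q i t) (q j t)) \<and>
             ((\<lambda>s. Ham N (\<lambda>j. q j t) ((\<lambda>j. p j t)(i := s)) (\<lambda>j. v j t))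
                has_real_derivative deriv (q i) t) (at (p i t)) \<and>
             ((\<lambda>s. Ham N ((\<lambda>j. q j t)(i := s)) (\<lambda>j. p j t) (\<lambda>j. v j t))
                has_real_derivative (- deriv (p i) t)) (at (q i t)) \<and>
             deriv (v i) t = 0)))
     \<and> (\<forall>i<N. \<forall>t\<in>T.
          ((\<lambda>s. Ham N (\<lambda>j. q j t) (\<lambda>j. p j t) ((\<lambda>j. v j t)(i := s)))
             has_real_derivative (\<Sum>j<N. v j t * G (q i t) (q j t))) (at (v i t)) \<and>
          (\<Sum>j<N. v j t * G (q i t) (q j t)) = vel N q v (q i t) t)"
proof -
  note T = assms(1) and dist = assms(3)
  have qd: "\<forall>j<N. q j C1_differentiable_on T" and pd: "\<forall>j<N. p j C1_differentiable_on T"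
    and vd: "\<forall>j<N. v j C1_differentiable_on T" using assms(2) by auto
  have qc: "\<forall>j<N. continuous_on T (q j)" using C1_open(3)[OF _ T] qd by blast
  have pc: "\<forall>j<N. continuous_on T (p j)" using C1_open(3)[OF _ T] pd by blast
  have vc: "\<forall>j<N. continuous_on T (v j)" using C1_open(3)[OF _ T] vd by blast
  have qc': "\<forall>j<N. continuous_on T (deriv (q j))" using C1_open(2)[OF _ T] qd by blast
  have pc': "\<forall>j<N. continuous_on T (deriv (p j))" using C1_open(2)[OF _ T] pd by blast
  have vc': "\<forall>j<N. continuous_on T (deriv (v j))" using C1_open(2)[OF _ T] vd by blast
  define ax where "ax j t = -(deriv (p j) t) - (dvel N q p (q j t) t * p j t + dvel N q v (q j t) t * v j t)" for j t
  define bx where "bx j t = p j t * (vel N q p (q j t) t - deriv (q j) t)" for j t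
  define ay where "ay j t = -(deriv (v j) t)" for j t
  define by' where "by' j t = v j t * (vel N q p (q j t) t - deriv (q j) t)" for j t
  have X: "weak_EP_x N q p v T \<longleftrightarrow> (\<forall>j<N. \<forall>t\<in>T. ax j t = 0 \<and> bx j t = 0)"
    unfolding weak_EP_x_def
  proof (rule weak_iff[OF T qd pd dist])
    show "\<forall>j<N. continuous_on T (ax j)" unfolding ax_def
      using pc' pc vc vel_cont(2)[OF T qc pc dist] vel_cont(2)[OF T qc vc dist]
      by (auto intro!: continuous_intros)
    show "\<forall>j<N. continuous_on T (bx j)" unfolding bx_def
      using pc qc' vel_cont(1)[OF T qc pc dist]
      by (auto intro!: continuous_intros)
  qed (simp add: ax_def bx_def sum.distrib[symmetric] algebra_simps)
  have Y: "weak_EP_y N q p v T \<longleftrightarrow> (\<forall>j<N. \<forall>t\<in>T. ay j t = 0 \<and> by' j t = 0)"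
    unfolding weak_EP_y_def
  proof (rule weak_iff[OF T qd vd dist])
    show "\<forall>j<N. continuous_on T (ay j)" unfolding ay_def
      using vc' by (auto intro!: continuous_intros)
    show "\<forall>j<N. continuous_on T (by' j)" unfolding by'_def
      using vc qc' vel_cont(1)[OF T qc pc dist]
      by (auto intro!: continuous_intros)
  qed (simp add: ay_def by'_def sum.distrib[symmetric] algebra_simps)
  have Hq: "((\<lambda>s. Ham N ((\<lambda>j. q j t)(i := s)) (\<lambda>j. p j t) (\<lambda>j. v j t))
              has_real_derivative (p i t * dvel N q p (q i t) t + v i t * dvel N q v (q i t) t)) (at (q i t))"
    if i: "i < N" and t: "t \<in> T" for i t
    using Ham_dq[OF i, of "\<lambda>j. q j t" "\<lambda>j. p j t" "\<lambda>j. v j t"] dist i t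
    unfolding dvel_def by auto
  have Hp: "((\<lambda>s. Ham N (\<lambda>j. q j t) ((\<lambda>j. p j t)(i := s)) (\<lambda>j. v j t))
              has_real_derivative (\<Sum>j<N. p j t * G (q i t) (q j t))) (at (p i t))"
    if i: "i < N" for i t
    using Ham_dp[OF i, of "\<lambda>j. q j t" "\<lambda>j. p j t" "\<lambda>j. v j t"] by simp
  have Hv: "((\<lambda>s. Ham N (\<lambda>j. q j t) (\<lambda>j. p j t) ((\<lambda>j. v j t)(i := s)))
             has_real_derivative (\<Sum>j<N. v j t * G (q i t) (q j t))) (at (v i t))"
    if i: "i < N" for i t
    using Ham_dp[OF i, of "\<lambda>j. q j t" "\<lambda>j. v j t" "\<lambda>j. p j t"] by (simp add: Ham_swap[of N _ "\<lambda>j. p j t"])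
  have velp: "vel N q p (q i t) t = (\<Sum>j<N. p j t * G (q i t) (q j t))" for i t
    unfolding vel_def by simp
  have P1: "weak_EP_x N q p v T \<longleftrightarrow>
        (\<forall>i<N. \<forall>t\<in>T.
           p i t * (deriv (q i) t - (\<Sum>j<N. p j t * G (q i t) (q j t))) = 0 \<and>
           ((\<lambda>s. Ham N ((\<lambda>j. q j t)(i := s)) (\<lambda>j. p j t) (\<lambda>j. v j t))
              has_real_derivative (- deriv (p i) t)) (at (q i t)))"
    unfolding X
  proof (intro all_cong1 imp_cong refl ball_cong)
    fix i t assume i: "i < N" and t: "t \<in> T"
    show "(ax i t = 0 \<and> bx i t = 0) \<longleftrightarrow> p i t * (deriv (q i) t - (\<Sum>j<N. p j t * G (q i t) (q j t))) = 0 \<and>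
           ((\<lambda>s. Ham N ((\<lambda>j. q j t)(i := s)) (\<lambda>j. p j t) (\<lambda>j. v j t))
              has_real_derivative (- deriv (p i) t)) (at (q i t))"
      unfolding deriv_iff[OF Hq[OF i t]] ax_def bx_def velp by (auto simp: algebra_simps)
  qed
  have P2: "weak_EP_y N q p v T \<longleftrightarrow>
        (\<forall>i<N. \<forall>t\<in>T.
           v i t * (deriv (q i) t - (\<Sum>j<N. p j t * G (q i t) (q j t))) = 0 \<and>
           deriv (v i) t = 0)"
    unfolding Y
  proof (intro all_cong1 imp_cong refl ball_cong)
    fix i t
    have "by' i t = - (v i t * (deriv (q i) t - (\<Sum>j<N. p j t * G (q i t) (q j t))))"
      unfolding by'_def velp by (simp add: algebra_simps)
    then show "(ay i t = 0 \<and> by' i t = 0) \<longleftrightarrow>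
      v i t * (deriv (q i) t - (\<Sum>j<N. p j t * G (q i t) (q j t))) = 0 \<and> deriv (v i) t = 0"
      unfolding ay_def by auto
  qed
  have P3: "(weak_EP_x N q p v T \<and> weak_EP_y N q p v T \<longleftrightarrow>
          (\<forall>i<N. \<forall>t\<in>T.
             deriv (q i) t = (\<Sum>j<N. p j t * G (q i t) (q j t)) \<and>
             ((\<lambda>s. Ham N (\<lambda>j. q j t) ((\<lambda>j. p j t)(i := s)) (\<lambda>j. v j t))
                has_real_derivative deriv (q i) t) (at (p i t)) \<and>
             ((\<lambda>s. Ham N ((\<lambda>j. q j t)(i := s)) (\<lambda>j. p j t) (\<lambda>j. v j t))
                has_real_derivative (- deriv (p i) t)) (at (q i t)) \<and>
             deriv (v i) t = 0))" if nz: "\<forall>i<N. \<forall>t\<in>T. p i t \<noteq> 0 \<or> v i t \<noteq> 0"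
  proof -
    show ?thesis
      unfolding P1 P2
    proof (intro iffI allI impI ballI conjI)
      fix i t assume H: "(\<forall>i<N. \<forall>t\<in>T. p i t * (deriv (q i) t - (\<Sum>j<N. p j t * G (q i t) (q j t))) = 0 \<and>
            ((\<lambda>s. Ham N ((\<lambda>j. q j t)(i := s)) (\<lambda>j. p j t) (\<lambda>j. v j t)) has_real_derivative - deriv (p i) t) (at (q i t))) \<and>
        (\<forall>i<N. \<forall>t\<in>T. v i t * (deriv (q i) t - (\<Sum>j<N. p j t * G (q i t) (q j t))) = 0 \<and> deriv (v i) t = 0)"
        and i: "i < N" and t: "t \<in> T"
      show e: "deriv (q i) t = (\<Sum>j<N. p j t * G (q i t) (q j t))"
        using H i t nz by force
      show "((\<lambda>s. Ham N (\<lambda>j. q j t) ((\<lambda>j. p j t)(i := s)) (\<lambda>j. v j t)) has_real_derivative deriv (q i) t) (at (p i t))"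
        using Hp[OF i, of t] e by simp
      show "((\<lambda>s. Ham N ((\<lambda>j. q j t)(i := s)) (\<lambda>j. p j t) (\<lambda>j. v j t)) has_real_derivative - deriv (p i) t) (at (q i t))"
        using H i t by blast
      show "deriv (v i) t = 0" using H i t by blast
    qed auto
  qed
  have P4: "\<forall>i<N. \<forall>t\<in>T.
          ((\<lambda>s. Ham N (\<lambda>j. q j t) (\<lambda>j. p j t) ((\<lambda>j. v j t)(i := s)))
             has_real_derivative (\<Sum>j<N. v j t * G (q i t) (q j t))) (at (v i t)) \<and>
          (\<Sum>j<N. v j t * G (q i t) (q j t)) = vel N q v (q i t) t"
    using Hv by (simp add: vel_def)
  show ?thesis using P1 P2 P3 P4 by blast
qed

end
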